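(* Let $d\ge2$, $n\ge1$, $d\le t\le dn$, and let $\gamma$ be a positive conductivity on the lattice graph below. The following are equivalent: (i) the only $\mathbf u\in\mathbb R^{L_t^{\mathcal S}\cup J_{t-1}^{\mathcal S}}$ with $\sum_{q\in\mathcal N(p)}\gamma_{pq}(\mathbf u_q-\mathbf u_p)=0$ for all $p\in L_{t-1}^{\mathcal S}$, $\mathbf u=0$ on $J_{t-1}^{\mathcal S}$, and $\gamma_{bq_b}(\mathbf u_{q_b}-\mathbf u_b)=0$ for all $b\in J_{t-1}^{\mathcal S}$, is $\mathbf u=0$; (ii) the vectors $\{\mathbf v_p|_{L_{t-1}^{\mathcal S}\cup J_{t-1}^{\mathcal S}}:p\in L_t^{\mathcal S}\}$ are linearly independent; (iii) the operator $T_2'^{(t)}$ is injective.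
   Context: Lattice: $D=\{x\in\mathbb Z^d:1\le x_i\le n\ \forall i\}$, $\partial D=\{p\in\mathbb Z^d:\min_{q\in D}\|q-p\|_{\ell^1}=1\}$; $E$ = unordered pairs $pq\subseteq D\cup\partial D$ with $\|p-q\|_{\ell^1}=1$, not both in $\partial D$; $\mathcal N(p)=\{q:pq\in E\}$; each $b\in\partial D$ has a unique neighbour $q_b\in D$. Conductivity $\gamma:E\to(0,\infty)$, symmetric. For $p\in D\cup\partial D$, $\mathbf v_p\in\mathbb R^{D\cup\partial D}$ has $(\mathbf v_p)_q=\gamma_{pq}$ for $q\in\mathcal N(p)$, $(\mathbf v_p)_p=-\sum_{r\in\mathcal N(p)}\gamma_{pr}$, and $0$ elsewhere. With $s(x)=\sum_ix_i$: $L_t=\{x\in D:s(x)=t\}$, $L_t^{\mathcal S}=\{x\in D:s(x)\le t\}$, $K_t^+=\{x\in\partial D:s(x)=t,\max_ix_i=n+1\}$, $K_t^-=\{x\in\partial D:s(x)=t,\min_ix_i=0\}$, $K_t^{\mathcal S\pm}=\bigcup_{\ell\le t}K_\ell^\pm$, $J_t^{\mathcal S}=K_t^{\mathcal S-}\cup K_{t+1}^{\mathcal S+}$. $T_2'^{(t)}:\mathbb R^{L_t}\to\mathbb R^{J_{t-1}^{\mathcal S}}$: for $\mathbf x\in\mathbb R^{L_t}$ let $\mathbf u$ be the unique function on $L_t^{\mathcal S}\cup J_{t-1}^{\mathcal S}$ with $\mathbf u=\mathbf x$ on $L_t$, $\mathbf u=0$ on $J_{t-1}^{\mathcal S}$,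 and $\sum_{q\in\mathcal N(p)}\gamma_{pq}(\mathbf u_q-\mathbf u_p)=0$ for $p\in L_{t-1}^{\mathcal S}$; then $(T_2'^{(t)}\mathbf x)_b=\gamma_{bq_b}(\mathbf u_{q_b}-\mathbf u_b)$ for $b\in J_{t-1}^{\mathcal S}$. *)

theory Defs
  imports Complex_Main
begin

text \<open>Points of Z^d are integer lists of length d; coordinate i of the paper is index i-1.\<close>

definition dist1 :: "int list \<Rightarrow> int list \<Rightarrow> int" where
  "dist1 x y = (\<Sum>i<length x. \<bar>x ! i - y ! i\<bar>)"

definition Dom :: "nat \<Rightarrow> nat \<Rightarrow> int list set" where
  "Dom d n = {x. length x = d \<and> (\<forall>i<d. 1 \<le> x ! i \<and> x ! i \<le> int n)}"

definition Bd :: "nat \<Rightarrow> nat \<Rightarrow> int list set" where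
  "Bd d n = {p. length p = d \<and> (\<exists>q\<in>Dom d n. dist1 q p = 1) \<and> (\<forall>q\<in>Dom d n. 1 \<le> dist1 q p)}"

definition edge :: "nat \<Rightarrow> nat \<Rightarrow> int list \<Rightarrow> int list \<Rightarrow> bool" where
  "edge d n p q \<longleftrightarrow> p \<in> Dom d n \<union> Bd d n \<and> q \<in> Dom d n \<union> Bd d n \<and> dist1 p q = 1
      \<and> \<not> (p \<in> Bd d n \<and> q \<in> Bd d n)"

definition nbrs :: "nat \<Rightarrow> nat \<Rightarrow> int list \<Rightarrow> int list set" where
  "nbrs d n p = {q. edge d n p q}"

definition vvec :: "nat \<Rightarrow> nat \<Rightarrow> (int list \<Rightarrow> int list \<Rightarrow> real) \<Rightarrow> int list \<Rightarrow> int list \<Rightarrow> real" where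
  "vvec d n \<gamma> p q = (if q \<in> nbrs d n p then \<gamma> p q
     else if q = p then - (\<Sum>r\<in>nbrs d n p. \<gamma> p r) else 0)"

definition qb :: "nat \<Rightarrow> nat \<Rightarrow> int list \<Rightarrow> int list" where
  "qb d n b = (THE q. q \<in> Dom d n \<and> edge d n b q)"

definition ssum :: "int list \<Rightarrow> int" where "ssum x = sum_list x"

definition Lev :: "nat \<Rightarrow> nat \<Rightarrow> int \<Rightarrow> int list set" where
  "Lev d n t = {x \<in> Dom d n. ssum x = t}"
definition LevS :: "nat \<Rightarrow> nat \<Rightarrow> int \<Rightarrow> int list set" where
  "LevS d n t = {x \<in> Dom d n. ssum x \<le> t}"
definition Kplus :: "nat \<Rightarrow> nat \<Rightarrow> int \<Rightarrow> int list set" where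
  "Kplus d n t = {x \<in> Bd d n. ssum x = t \<and> Max (set x) = int n + 1}"
definition Kminus :: "nat \<Rightarrow> nat \<Rightarrow> int \<Rightarrow> int list set" where
  "Kminus d n t = {x \<in> Bd d n. ssum x = t \<and> Min (set x) = 0}"
definition KSplus :: "nat \<Rightarrow> nat \<Rightarrow> int \<Rightarrow> int list set" where
  "KSplus d n t = (\<Union>l\<in>{..t}. Kplus d n l)"
definition KSminus :: "nat \<Rightarrow> nat \<Rightarrow> int \<Rightarrow> int list set" where
  "KSminus d n t = (\<Union>l\<in>{..t}. Kminus d n l)"
definition JS :: "nat \<Rightarrow> nat \<Rightarrow> int \<Rightarrow> int list set" where
  "JS d n t = KSminus d n t \<union> KSplus d n (t + 1)"

definition kirchhoff :: "nat \<Rightarrow> nat \<Rightarrow> (int list \<Rightarrow> int list \<Rightarrow> real) \<Rightarrow> (int list \<Rightarrow> real) \<Rightarrow> int list \<Rightarrow> bool" where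
  "kirchhoff d n \<gamma> u p \<longleftrightarrow> (\<Sum>q\<in>nbrs d n p. \<gamma> p q * (u q - u p)) = 0"

text \<open>Functions on a finite set A are represented as functions vanishing outside A.\<close>
definition supp_in :: "int list set \<Rightarrow> (int list \<Rightarrow> real) \<Rightarrow> bool" where
  "supp_in A u \<longleftrightarrow> (\<forall>q. q \<notin> A \<longrightarrow> u q = 0)"

definition lin_indep_restr :: "int list set \<Rightarrow> (int list \<Rightarrow> int list \<Rightarrow> real) \<Rightarrow> int list set \<Rightarrow> bool" where
  "lin_indep_restr I w A \<longleftrightarrow>
     (\<forall>c. (\<forall>q\<in>A. (\<Sum>p\<in>I. c p * w p q) = 0) \<longrightarrow> (\<forall>p\<in>I. c p = 0))"

definition T2' :: "nat \<Rightarrow> nat \<Rightarrow> (int list \<Rightarrow> int list \<Rightarrow> real) \<Rightarrow> int \<Rightarrow> (int list \<Rightarrow> real) \<Rightarrow> int list \<Rightarrow> real" where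
  "T2' d n \<gamma> t x =
    (let u = (THE u. supp_in (LevS d n t \<union> JS d n (t - 1)) u
                  \<and> (\<forall>q\<in>Lev d n t. u q = x q)
                  \<and> (\<forall>b\<in>JS d n (t - 1). u b = 0)
                  \<and> (\<forall>p\<in>LevS d n (t - 1). kirchhoff d n \<gamma> u p))
     in (\<lambda>b. if b \<in> JS d n (t - 1) then \<gamma> b (qb d n b) * (u (qb d n b) - u b) else 0))"

end

theory Submission
  imports Defs "HOL-Library.Function_Algebras"
begin


definition sc :: "real \<Rightarrow> (int list \<Rightarrow> real) \<Rightarrow> (int list \<Rightarrow> real)" where
  "sc c f = (\<lambda>x. c * f x)"

lemma vs_sc: "vector_space sc"
  by unfold_locales (auto simp: sc_def fun_eq_iff algebra_simps)

lemma sum_fun_apply: "(sum f A) x = (\<Sum>a\<in>A. f a x)" for f :: "'b \<Rightarrow> int list \<Rightarrow> real"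
  by (induction A rule: infinite_finite_induct) auto

lemma surj_gen:
  fixes F :: "(int list \<Rightarrow> real) \<Rightarrow> (int list \<Rightarrow> real)" and I :: "int list set"
  assumes fin: "finite I"
    and add: "\<And>a b. F (a + b) = F a + F b"
    and scl: "\<And>c a. F (sc c a) = sc c (F a)"
    and pres: "\<And>w. supp_in I w \<Longrightarrow> supp_in I (F w)"
    and inj: "\<And>w. supp_in I w \<Longrightarrow> F w = 0 \<Longrightarrow> w = 0"
    and y: "supp_in I y"
  shows "\<exists>w. supp_in I w \<and> F w = y"
proof -
  interpret V: vector_space sc by (rule vs_sc)
  interpret H: module_hom sc sc F
    by unfold_locales (auto simp: add scl V.vector_space_assms)
  define e where "e p = (\<lambda>q. if q = p then 1 else (0::real))" for p :: "int list"
  define B where "B = e ` I"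
  have finB: "finite B" using fin B_def by simp
  have eeq: "e a = e b \<longleftrightarrow> a = b" for a b by (auto simp: e_def fun_eq_iff)
  have inje: "inj_on e I" by (auto simp: inj_on_def eeq)
  have subsp: "V.subspace {w. supp_in I w}"
    unfolding V.subspace_def by (auto simp: supp_in_def sc_def)
  have spanB: "V.span B = {w. supp_in I w}"
  proof
    show "V.span B \<subseteq> {w. supp_in I w}"
      by (rule V.span_minimal[OF _ subsp]) (auto simp: B_def e_def supp_in_def)
  next
    show "{w. supp_in I w} \<subseteq> V.span B"
    proof
      fix w assume "w \<in> {w. supp_in I w}"
      hence w: "supp_in I w" by simp
      have "w = (\<Sum>p\<in>I. sc (w p) (e p))"
      proof
        fix x
        show "w x = (\<Sum>p\<in>I. sc (w p) (e p)) x"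
          using w fin by (auto simp: sum_fun_apply sc_def e_def supp_in_def if_distrib cong: if_cong)
      qed
      also have "\<dots> \<in> V.span B"
        by (intro V.span_sum V.span_scale V.span_base) (auto simp: B_def)
      finally show "w \<in> V.span B" .
    qed
  qed
  have indB: "V.independent B"
    unfolding V.independent_explicit_module
  proof (intro allI impI)
    fix t u v assume t: "finite t" "t \<subseteq> B" "(\<Sum>v\<in>t. sc (u v) v) = 0" "v \<in> t"
    then obtain p where p: "p \<in> I" "v = e p" by (auto simp: B_def)
    have "(\<Sum>v\<in>t. sc (u v) v) p = 0" using t(3) by simp
    hence "(\<Sum>v\<in>t. u v * v p) = 0" by (simp add: sum_fun_apply sc_def)
    moreover have "(\<Sum>v\<in>t. u v * v p) = u v"
    proof -
      have "(\<Sum>v\<in>t. u v * v p) = (\<Sum>v'\<in>t. if v' = v then u v else 0)"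
      proof (rule sum.cong)
        fix v' assume "v' \<in> t"
        then obtain p' where p': "p' \<in> I" "v' = e p'" using t(2) by (auto simp: B_def)
        show "u v' * v' p = (if v' = v then u v else 0)"
        proof (cases "p' = p")
          case True thus ?thesis using p p' by (simp add: e_def)
        next
          case False
          hence "v' \<noteq> v" "v' p = 0" using p p' eeq by (auto simp: e_def)
          thus ?thesis by simp
        qed
      qed simp
      also have "\<dots> = u v" using t by simp
      finally show ?thesis .
    qed
    ultimately show "u v = 0" by simp
  qed
  have injF: "inj_on F (V.span B)"
    unfolding H.inj_on_iff_eq_0[OF V.subspace_span] using inj spanB by auto
  have indFB: "V.independent (F ` B)"
    by (rule H.independent_injective_image[OF indB injF])
  have cardFB: "card (F ` B) = card B"
    by (rule card_image, rule inj_on_subset[OF injF V.span_superset])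
  have FBsub: "F ` B \<subseteq> V.span B"
    using pres spanB V.span_superset by blast
  have "y \<in> V.span (F ` B)"
  proof (rule ccontr)
    assume nin: "y \<notin> V.span (F ` B)"
    have i2: "V.independent (insert y (F ` B))" by (rule V.independent_insertI[OF nin indFB])
    have "insert y (F ` B) \<subseteq> V.span B" using FBsub y spanB by auto
    from V.independent_span_bound[OF finB i2 this]
    have "card (insert y (F ` B)) \<le> card B" by simp
    moreover have "y \<notin> F ` B" using nin V.span_superset by blast
    ultimately show False using cardFB finB by simp
  qed
  hence "y \<in> F ` V.span B" using H.span_image by simp
  thus ?thesis using spanB by auto
qed



lemma dist1_sym: "length x = length y \<Longrightarrow> dist1 x y = dist1 y x"
  unfolding dist1_def by (simp add: abs_minus_commute)

lemma dist1_self[simp]: "dist1 x x = 0"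
  unfolding dist1_def by simp

lemma dist1_nonneg: "0 \<le> dist1 x y"
  unfolding dist1_def by (simp add: sum_nonneg)

lemma coord_le_dist: "i < length x \<Longrightarrow> \<bar>x!i - y!i\<bar> \<le> dist1 x y"
  unfolding dist1_def by (rule member_le_sum) auto

lemma dist1_split: "k < length x \<Longrightarrow>
   dist1 x y = \<bar>x!k - y!k\<bar> + (\<Sum>i\<in>{..<length x} - {k}. \<bar>x!i - y!i\<bar>)"
  unfolding dist1_def by (subst sum.remove[of _ k]) auto

lemma dist1_one_at:
  assumes "k < length x" "\<bar>x!k - y!k\<bar> = 1" "dist1 x y = 1" "i < length x" "i \<noteq> k"
  shows "x!i = y!i"
proof -
  have "(\<Sum>i\<in>{..<length x} - {k}. \<bar>x!i - y!i\<bar>) = 0"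
    using dist1_split[OF assms(1), of y] assms(2,3) by simp
  hence "\<forall>j\<in>{..<length x} - {k}. \<bar>x!j - y!j\<bar> = 0"
    by (subst (asm) sum_nonneg_eq_0_iff) auto
  thus ?thesis using assms(4,5) by auto
qed

lemma Dom_coord: "p \<in> Dom d n \<Longrightarrow> i < d \<Longrightarrow> 1 \<le> p!i \<and> p!i \<le> int n"
  by (simp add: Dom_def)

lemma Dom_len: "p \<in> Dom d n \<Longrightarrow> length p = d" by (simp add: Dom_def)
lemma Bd_len: "p \<in> Bd d n \<Longrightarrow> length p = d" by (simp add: Bd_def)

lemma Dom_not_Bd: "p \<in> Dom d n \<Longrightarrow> p \<notin> Bd d n"
proof
  assume "p \<in> Dom d n" "p \<in> Bd d n"
  hence "1 \<le> dist1 p p" unfolding Bd_def by blast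
  thus False by simp
qed

lemma Bd_not_Dom: "p \<in> Bd d n \<Longrightarrow> p \<notin> Dom d n"
  using Dom_not_Bd by blast

lemma Dom_sub: "Dom d n \<subseteq> {xs. set xs \<subseteq> {0..int n + 1} \<and> length xs = d}"
proof
  fix x assume x: "x \<in> Dom d n"
  have "x!i \<in> {0..int n+1}" if "i < length x" for i
    using x that unfolding Dom_def by fastforce
  thus "x \<in> {xs. set xs \<subseteq> {0..int n + 1} \<and> length xs = d}"
    using x by (auto simp: in_set_conv_nth Dom_def)
qed

lemma Bd_sub: "Bd d n \<subseteq> {xs. set xs \<subseteq> {0..int n + 1} \<and> length xs = d}"
proof
  fix b assume b: "b \<in> Bd d n"
  then obtain q where q: "q \<in> Dom d n" "dist1 q b = 1" by (auto simp: Bd_def)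
  have lb: "length b = d" using b by (simp add: Bd_def)
  have lq: "length q = d" using q by (simp add: Dom_def)
  have "b!i \<in> {0..int n+1}" if "i < d" for i
  proof -
    have "\<bar>q!i - b!i\<bar> \<le> 1" using coord_le_dist[of i q b] q lq that by simp
    moreover have "1 \<le> q!i" "q!i \<le> int n" using q that by (auto simp: Dom_def)
    ultimately show ?thesis by auto
  qed
  thus "b \<in> {xs. set xs \<subseteq> {0..int n + 1} \<and> length xs = d}"
    using lb by (auto simp: in_set_conv_nth)
qed

lemma finite_DB: "finite (Dom d n \<union> Bd d n)"
proof -
  have "finite {xs. set xs \<subseteq> {0..int n + 1} \<and> length xs = d}"
    by (rule finite_lists_length_eq) simp
  thus ?thesis using Dom_sub Bd_sub by (meson finite_Un finite_subset)
qed

lemma edge_sym: "edge d n p q \<Longrightarrow> edge d n q p"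
proof -
  assume e: "edge d n p q"
  hence "length p = d" "length q = d" unfolding edge_def using Dom_len Bd_len by blast+
  hence "dist1 q p = dist1 p q" using dist1_sym by simp
  thus ?thesis using e unfolding edge_def by auto
qed

lemma nbrs_sub: "nbrs d n p \<subseteq> Dom d n \<union> Bd d n"
  by (auto simp: nbrs_def edge_def)

lemma finite_nbrs: "finite (nbrs d n p)"
  using finite_subset[OF nbrs_sub finite_DB] .

lemma not_self_nbr: "p \<notin> nbrs d n p"
  by (simp add: nbrs_def edge_def)

lemma nbrs_sym: "q \<in> nbrs d n p \<longleftrightarrow> p \<in> nbrs d n q"
  by (auto simp: nbrs_def intro: edge_sym)

lemma bd_nbr_coord:
  assumes b: "b \<in> Bd d n" and p: "p \<in> Dom d n" and e: "edge d n b p"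
    and k: "k < d" "\<not> (1 \<le> b!k \<and> b!k \<le> int n)"
  shows "\<forall>i<d. p!i = (if i = k then (if b!k \<le> 0 then b!k + 1 else b!k - 1) else b!i)"
proof -
  have lb: "length b = d" using b by (simp add: Bd_def)
  have lp: "length p = d" using p by (simp add: Dom_def)
  have dd: "dist1 b p = 1" using e by (simp add: edge_def)
  have pk: "1 \<le> p!k" "p!k \<le> int n" using p k by (auto simp: Dom_def)
  have "\<bar>b!k - p!k\<bar> \<le> 1" using coord_le_dist[of k b p] lb k dd by simp
  hence ak: "\<bar>b!k - p!k\<bar> = 1" using k pk by auto
  show ?thesis
  proof (intro allI impI)
    fix i assume i: "i < d"
    show "p!i = (if i = k then (if b!k \<le> 0 then b!k + 1 else b!k - 1) else b!i)"
    proof (cases "i = k")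
      case True thus ?thesis using ak pk k by auto
    next
      case False thus ?thesis using dist1_one_at[of k b p i] lb k ak dd i by simp
    qed
  qed
qed

lemma bd_unique:
  assumes b: "b \<in> Bd d n" and p: "p \<in> Dom d n" "edge d n b p"
    and p': "p' \<in> Dom d n" "edge d n b p'"
  shows "p = p'"
proof -
  have lb: "length b = d" using b by (simp add: Bd_def)
  have "b \<notin> Dom d n" using Bd_not_Dom b by blast
  then obtain k where k: "k < d" "\<not> (1 \<le> b!k \<and> b!k \<le> int n)"
    using lb by (auto simp: Dom_def)
  show ?thesis
    using bd_nbr_coord[OF b p k] bd_nbr_coord[OF b p' k] p p'
    by (intro nth_equalityI) (auto simp: Dom_def)
qed

lemma bd_has_nbr:
  assumes b: "b \<in> Bd d n" shows "\<exists>q. q \<in> Dom d n \<and> edge d n b q"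
proof -
  obtain q where q: "q \<in> Dom d n" "dist1 q b = 1" using b by (auto simp: Bd_def)
  have "dist1 b q = 1" using q dist1_sym[of q b] b by (simp add: Dom_def Bd_def)
  thus ?thesis using q b Dom_not_Bd by (auto simp: edge_def)
qed

lemma qb_prop:
  assumes b: "b \<in> Bd d n" shows "qb d n b \<in> Dom d n \<and> edge d n b (qb d n b)"
  unfolding qb_def
  by (rule theI'[where P="\<lambda>q. q \<in> Dom d n \<and> edge d n b q"])
     (use bd_has_nbr[OF b] bd_unique[OF b] in blast)

lemma qb_eq:
  assumes b: "b \<in> Bd d n" and p: "p \<in> Dom d n" "edge d n p b"
  shows "p = qb d n b"
  using bd_unique[OF b p(1) edge_sym[OF p(2)]] qb_prop[OF b] by blast

definition up1 :: "int list \<Rightarrow> int list" where "up1 p = p[0 := p!0 + 1]"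

lemma up1_props:
  assumes d: "d \<ge> 1" and p: "p \<in> Dom d n"
  shows "up1 p \<in> nbrs d n p \<and> ssum (up1 p) = ssum p + 1"
proof -
  have lp: "length p = d" using p by (simp add: Dom_def)
  have lu: "length (up1 p) = d" using lp by (simp add: up1_def)
  have nth: "up1 p ! i = (if i = 0 then p!0 + 1 else p!i)" if "i < d" for i
    using that lp by (simp add: up1_def nth_list_update)
  have dd: "dist1 p (up1 p) = 1"
  proof -
    have "dist1 p (up1 p) = (\<Sum>i<d. if i = 0 then 1 else 0)"
      unfolding dist1_def lp by (rule sum.cong) (auto simp: nth)
    also have "\<dots> = 1" using d by simp
    finally show ?thesis .
  qed
  have inDB: "up1 p \<in> Dom d n \<union> Bd d n"
  proof (cases "p!0 < int n")
    case True
    have pi: "1 \<le> p!i \<and> p!i \<le> int n" if "i < d" for i using p that by (simp add: Dom_def)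
    have "1 \<le> up1 p!i \<and> up1 p!i \<le> int n" if "i < d" for i
      using True nth[OF that] pi[OF that] pi[of 0] d by (cases "i = 0") auto
    hence "up1 p \<in> Dom d n" using lu unfolding Dom_def by simp
    thus ?thesis by simp
  next
    case False
    hence p0: "p!0 = int n" using Dom_coord[OF p, of 0] d by auto
    have "up1 p \<in> Bd d n" unfolding Bd_def
    proof (intro CollectI conjI ballI bexI)
      show "length (up1 p) = d" by (rule lu)
      show "dist1 p (up1 p) = 1" by (rule dd)
      show "p \<in> Dom d n" by (rule p)
    next
      fix q assume q: "q \<in> Dom d n"
      have "\<bar>q!0 - up1 p!0\<bar> \<le> dist1 q (up1 p)" using coord_le_dist[of 0 q "up1 p"] Dom_len[OF q] d by simp
      moreover have "q!0 \<le> int n" using Dom_coord[OF q, of 0] d by auto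
      moreover have "up1 p ! 0 = int n + 1" using nth[of 0] d p0 by simp
      ultimately show "1 \<le> dist1 q (up1 p)" by simp
    qed
    thus ?thesis by simp
  qed
  have "edge d n p (up1 p)" unfolding edge_def using p inDB dd Dom_not_Bd by auto
  moreover have "ssum (up1 p) = ssum p + 1"
  proof -
    have "ssum (up1 p) = (\<Sum>i=0..<d. up1 p ! i)" by (simp add: ssum_def sum_list_sum_nth lu)
    also have "\<dots> = (\<Sum>i=0..<d. p!i + (if i = 0 then 1 else 0))" by (rule sum.cong) (auto simp: nth)
    also have "\<dots> = (\<Sum>i=0..<d. p!i) + 1" using d by (simp add: sum.distrib)
    also have "\<dots> = ssum p + 1" by (simp add: ssum_def sum_list_sum_nth lp)
    finally show ?thesis .
  qed
  ultimately show ?thesis by (simp add: nbrs_def)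
qed

lemma max_le:
  assumes d: "d \<ge> 1" and fin: "finite I" and sub: "I \<subseteq> Dom d n"
    and pos: "\<And>p q. edge d n p q \<Longrightarrow> \<gamma> p q > 0"
    and zero: "\<And>q. q \<notin> I \<Longrightarrow> w q = 0"
    and K: "\<And>p. p \<in> I \<Longrightarrow> kirchhoff d n \<gamma> w p"
  shows "w q \<le> 0"
proof (rule ccontr)
  assume "\<not> w q \<le> 0"
  hence wq: "w q > 0" by simp
  hence qI: "q \<in> I" using zero[of q] by (cases "q \<in> I") auto
  define M where "M = Max (w ` I)"
  have Mge: "w r \<le> M" if "r \<in> I" for r using fin that by (simp add: M_def)
  have Mpos: "M > 0" using Mge[OF qI] wq by simp
  have wle: "w r \<le> M" for r using Mge[of r] zero[of r] Mpos by (cases "r \<in> I") auto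
  define Ms where "Ms = {p\<in>I. w p = M}"
  have finMs: "finite Ms" using fin by (simp add: Ms_def)
  have "M \<in> w ` I" unfolding M_def using fin qI by (intro Max_in) auto
  hence neMs: "Ms \<noteq> {}" unfolding Ms_def by auto
  define m where "m = Max (ssum ` Ms)"
  have "m \<in> ssum ` Ms" unfolding m_def using finMs neMs by (intro Max_in) auto
  then obtain p where p: "p \<in> Ms" "ssum p = m" by blast
  have pI: "p \<in> I" and wp: "w p = M" using p by (auto simp: Ms_def)
  have kp: "(\<Sum>r\<in>nbrs d n p. \<gamma> p r * (w r - w p)) = 0" using K[OF pI] by (simp add: kirchhoff_def)
  have S0: "(\<Sum>r\<in>nbrs d n p. - (\<gamma> p r * (w r - w p))) = 0"
    using kp by (simp only: sum_negf)
  have NN: "0 \<le> - (\<gamma> p r * (w r - w p))" if r: "r \<in> nbrs d n p" for r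
  proof -
    have "\<gamma> p r > 0" using pos r by (simp add: nbrs_def)
    moreover have "w r - w p \<le> 0" using wle[of r] wp by simp
    ultimately show ?thesis by (simp add: mult_nonneg_nonpos)
  qed
  have all0: "\<forall>r\<in>nbrs d n p. - (\<gamma> p r * (w r - w p)) = 0"
    using sum_nonneg_eq_0_iff[OF finite_nbrs NN] S0 by (simp only:)
  have u: "up1 p \<in> nbrs d n p" "ssum (up1 p) = ssum p + 1" using up1_props[OF d, of p] pI sub by blast+
  have gp: "\<gamma> p (up1 p) > 0" using pos u(1) by (simp add: nbrs_def)
  have "\<gamma> p (up1 p) * (w (up1 p) - w p) = 0" using bspec[OF all0 u(1)] by simp
  hence "w (up1 p) = M" using gp wp by simp
  hence "up1 p \<in> I" using Mpos zero[of "up1 p"] by (cases "up1 p \<in> I") auto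
  hence "up1 p \<in> Ms" using \<open>w (up1 p) = M\<close> by (simp add: Ms_def)
  hence "ssum (up1 p) \<le> m" using finMs by (simp add: m_def)
  thus False using u(2) p(2) by simp
qed

lemma max_principle:
  assumes d: "d \<ge> 1" and fin: "finite I" and sub: "I \<subseteq> Dom d n"
    and pos: "\<And>p q. edge d n p q \<Longrightarrow> \<gamma> p q > 0"
    and zero: "\<And>q. q \<notin> I \<Longrightarrow> w q = 0"
    and K: "\<And>p. p \<in> I \<Longrightarrow> kirchhoff d n \<gamma> w p"
  shows "w = (\<lambda>_. 0)"
proof
  fix q
  have K': "kirchhoff d n \<gamma> (\<lambda>x. - w x) p" if "p \<in> I" for p
  proof -
    have "(\<Sum>r\<in>nbrs d n p. \<gamma> p r * (- w r - - w p)) = - (\<Sum>r\<in>nbrs d n p. \<gamma> p r * (w r - w p))"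
      by (simp add: sum_negf[symmetric] algebra_simps)
    thus ?thesis using K[OF that] by (simp add: kirchhoff_def)
  qed
  have "w q \<le> 0" by (rule max_le[OF d fin sub pos zero K])
  moreover have "- w q \<le> 0"
    by (rule max_le[OF d fin sub pos, where w="\<lambda>x. - w x"]) (use zero K' in auto)
  ultimately show "w q = 0" by simp
qed



lemma LevS_split: "LevS d n t = LevS d n (t - 1) \<union> Lev d n t"
  by (auto simp: LevS_def Lev_def)

lemma Lev_notin: "x \<in> Lev d n t \<Longrightarrow> x \<notin> LevS d n (t - 1)"
  by (auto simp: LevS_def Lev_def)

lemma LevS_Dom: "LevS d n t \<subseteq> Dom d n" by (auto simp: LevS_def)
lemma Lev_Dom: "Lev d n t \<subseteq> Dom d n" by (auto simp: Lev_def)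

lemma JS_Bd: "JS d n t \<subseteq> Bd d n"
  by (auto simp: JS_def KSminus_def KSplus_def Kminus_def Kplus_def)

lemma finite_LevS: "finite (LevS d n t)"
  using finite_subset[OF _ finite_DB] LevS_Dom by blast

lemma KI:
  assumes sym: "\<And>p q. edge d n p q \<Longrightarrow> \<gamma> p q = \<gamma> q p"
    and LS: "LS \<subseteq> Dom d n"
    and zero: "\<And>r. r \<notin> LS \<Longrightarrow> u r = 0"
    and q: "q \<in> Dom d n \<union> Bd d n"
  shows "(\<Sum>r\<in>LS. u r * vvec d n \<gamma> r q) = (\<Sum>r\<in>nbrs d n q. \<gamma> q r * (u r - u q))"
proof -
  let ?A = "Dom d n \<union> Bd d n"
  have "(\<Sum>r\<in>LS. u r * vvec d n \<gamma> r q) = (\<Sum>r\<in>?A. u r * vvec d n \<gamma> r q)"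
    by (rule sum.mono_neutral_left[OF finite_DB]) (use LS zero in auto)
  also have "\<dots> = (\<Sum>r\<in>?A. (if r \<in> nbrs d n q then \<gamma> q r * u r else 0)
       + (if r = q then - u q * (\<Sum>s\<in>nbrs d n q. \<gamma> q s) else 0))"
  proof (rule sum.cong[OF refl])
    fix r assume "r \<in> ?A"
    show "u r * vvec d n \<gamma> r q = (if r \<in> nbrs d n q then \<gamma> q r * u r else 0)
       + (if r = q then - u q * (\<Sum>s\<in>nbrs d n q. \<gamma> q s) else 0)"
    proof (cases "r \<in> nbrs d n q")
      case True
      hence "q \<in> nbrs d n r" "r \<noteq> q" using nbrs_sym not_self_nbr by (metis, metis)
      moreover have "\<gamma> r q = \<gamma> q r" using True sym[of q r] by (simp add: nbrs_def)
      ultimately show ?thesis using True by (simp add: vvec_def)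
    next
      case False
      hence "q \<notin> nbrs d n r" using nbrs_sym by metis
      thus ?thesis using False not_self_nbr[where p=q and d=d and n=n] by (auto simp: vvec_def)
    qed
  qed
  also have "\<dots> = (\<Sum>r\<in>?A. (if r \<in> nbrs d n q then \<gamma> q r * u r else 0))
       + (\<Sum>r\<in>?A. (if r = q then - u q * (\<Sum>s\<in>nbrs d n q. \<gamma> q s) else 0))"
    by (rule sum.distrib)
  also have "(\<Sum>r\<in>?A. (if r \<in> nbrs d n q then \<gamma> q r * u r else 0)) = (\<Sum>r\<in>nbrs d n q. \<gamma> q r * u r)"
    using sum.inter_restrict[OF finite_DB[of d n], where g="\<lambda>r. \<gamma> q r * u r" and B="nbrs d n q"] nbrs_sub[of d n q]
    by (simp add: Int_absorb1)
  also have "(\<Sum>r\<in>?A. (if r = q then - u q * (\<Sum>s\<in>nbrs d n q. \<gamma> q s) else 0))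
      = - u q * (\<Sum>s\<in>nbrs d n q. \<gamma> q s)"
    using q finite_DB by simp
  also have "(\<Sum>r\<in>nbrs d n q. \<gamma> q r * u r) + - u q * (\<Sum>s\<in>nbrs d n q. \<gamma> q s)
      = (\<Sum>r\<in>nbrs d n q. \<gamma> q r * (u r - u q))"
    by (simp add: sum_subtractf sum_distrib_left right_diff_distrib mult.commute sum_negf)
  finally show ?thesis .
qed

lemma BI:
  assumes LS: "LS \<subseteq> Dom d n"
    and zero: "\<And>r. r \<notin> LS \<Longrightarrow> u r = 0"
    and b: "b \<in> Bd d n"
  shows "(\<Sum>r\<in>LS. u r * vvec d n \<gamma> r b) = u (qb d n b) * \<gamma> (qb d n b) b"
proof -
  have qbp: "qb d n b \<in> Dom d n" "edge d n (qb d n b) b" using qb_prop[OF b] edge_sym by blast+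
  have "(\<Sum>r\<in>LS. u r * vvec d n \<gamma> r b) = (\<Sum>r\<in>LS. if r = qb d n b then u (qb d n b) * \<gamma> (qb d n b) b else 0)"
  proof (rule sum.cong[OF refl])
    fix r assume r: "r \<in> LS"
    hence rD: "r \<in> Dom d n" using LS by blast
    show "u r * vvec d n \<gamma> r b = (if r = qb d n b then u (qb d n b) * \<gamma> (qb d n b) b else 0)"
    proof (cases "r = qb d n b")
      case True
      thus ?thesis using qbp by (simp add: vvec_def nbrs_def)
    next
      case False
      hence "b \<notin> nbrs d n r" using qb_eq[OF b rD] by (auto simp: nbrs_def)
      moreover have "b \<noteq> r" using rD b Dom_not_Bd by blast
      ultimately show ?thesis using False by (simp add: vvec_def)
    qed
  qed
  also have "\<dots> = u (qb d n b) * \<gamma> (qb d n b) b"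
    using zero[of "qb d n b"] finite_subset[OF LS] finite_DB by (cases "qb d n b \<in> LS") (simp_all add: sum.delta)
  finally show ?thesis .
qed



definition Pdir :: "nat \<Rightarrow> nat \<Rightarrow> (int list \<Rightarrow> int list \<Rightarrow> real) \<Rightarrow> int \<Rightarrow> (int list \<Rightarrow> real) \<Rightarrow> (int list \<Rightarrow> real) \<Rightarrow> bool" where
  "Pdir d n \<gamma> t x u \<longleftrightarrow> supp_in (LevS d n t \<union> JS d n (t - 1)) u
                  \<and> (\<forall>q\<in>Lev d n t. u q = x q)
                  \<and> (\<forall>b\<in>JS d n (t - 1). u b = 0)
                  \<and> (\<forall>p\<in>LevS d n (t - 1). kirchhoff d n \<gamma> u p)"

lemma T2'_alt: "T2' d n \<gamma> t x = (\<lambda>b. if b \<in> JS d n (t - 1)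
   then \<gamma> b (qb d n b) * ((THE u. Pdir d n \<gamma> t x u) (qb d n b) - (THE u. Pdir d n \<gamma> t x u) b) else 0)"
  unfolding T2'_def Pdir_def Let_def ..

lemma kirch_diff: "kirchhoff d n \<gamma> u1 p \<Longrightarrow> kirchhoff d n \<gamma> u2 p \<Longrightarrow> kirchhoff d n \<gamma> (\<lambda>q. u1 q - u2 q) p"
proof -
  assume a: "kirchhoff d n \<gamma> u1 p" "kirchhoff d n \<gamma> u2 p"
  have "(\<Sum>q\<in>nbrs d n p. \<gamma> p q * ((u1 q - u2 q) - (u1 p - u2 p)))
     = (\<Sum>q\<in>nbrs d n p. \<gamma> p q * (u1 q - u1 p)) - (\<Sum>q\<in>nbrs d n p. \<gamma> p q * (u2 q - u2 p))"
    by (simp add: sum_subtractf[symmetric] algebra_simps)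
  thus ?thesis using a by (simp add: kirchhoff_def)
qed

lemma Pdir_unique:
  assumes d: "d \<ge> 1" and pos: "\<And>p q. edge d n p q \<Longrightarrow> \<gamma> p q > 0"
    and u1: "Pdir d n \<gamma> t x u1" and u2: "Pdir d n \<gamma> t x u2"
  shows "u1 = u2"
proof -
  let ?I = "LevS d n (t - 1)"
  let ?w = "\<lambda>q. u1 q - u2 q"
  have "?w = (\<lambda>_. 0)"
  proof (rule max_principle[OF d finite_LevS LevS_Dom pos])
    fix q assume q: "q \<notin> ?I"
    show "u1 q - u2 q = 0"
    proof (cases "q \<in> Lev d n t")
      case True thus ?thesis using u1 u2 by (simp add: Pdir_def)
    next
      case False
      hence "q \<notin> LevS d n t" using q LevS_split[of d n t] by blast
      thus ?thesis using u1 u2 by (cases "q \<in> JS d n (t - 1)") (auto simp: Pdir_def supp_in_def)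
    qed
  next
    fix p assume "p \<in> ?I"
    thus "kirchhoff d n \<gamma> ?w p" using u1 u2 kirch_diff by (simp add: Pdir_def)
  qed
  thus ?thesis by (simp add: fun_eq_iff)
qed

definition Kop :: "nat \<Rightarrow> nat \<Rightarrow> (int list \<Rightarrow> int list \<Rightarrow> real) \<Rightarrow> (int list \<Rightarrow> real) \<Rightarrow> int list \<Rightarrow> real" where
  "Kop d n \<gamma> w p = (\<Sum>q\<in>nbrs d n p. \<gamma> p q * (w q - w p))"

lemma Kop_add: "Kop d n \<gamma> (\<lambda>q. a q + b q) p = Kop d n \<gamma> a p + Kop d n \<gamma> b p"
  unfolding Kop_def by (simp add: sum.distrib[symmetric] algebra_simps)

lemma Pdir_exists:
  assumes d: "d \<ge> 1" and pos: "\<And>p q. edge d n p q \<Longrightarrow> \<gamma> p q > 0"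
  shows "\<exists>u. Pdir d n \<gamma> t x u"
proof -
  let ?I = "LevS d n (t - 1)"
  define x' where "x' = (\<lambda>q. if q \<in> Lev d n t then x q else 0)"
  define F where "F = (\<lambda>w p. if p \<in> ?I then Kop d n \<gamma> w p else (0::real))"
  define y where "y = (\<lambda>p. if p \<in> ?I then - Kop d n \<gamma> x' p else 0)"
  have "\<exists>w. supp_in ?I w \<and> F w = y"
  proof (rule surj_gen[OF finite_LevS])
    fix a b :: "int list \<Rightarrow> real"
    show "F (a + b) = F a + F b"
      unfolding F_def plus_fun_def by (simp add: Kop_add fun_eq_iff)
  next
    fix c a
    show "F (sc c a) = sc c (F a)"
      unfolding F_def sc_def Kop_def by (simp add: fun_eq_iff sum_distrib_left algebra_simps)
  next
    fix w show "supp_in ?I (F w)" by (simp add: F_def supp_in_def)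
  next
    fix w assume w: "supp_in ?I w" "F w = 0"
    show "w = 0"
    proof -
      have "w = (\<lambda>_. 0)"
      proof (rule max_principle[OF d finite_LevS LevS_Dom pos])
        show "\<And>q. q \<notin> ?I \<Longrightarrow> w q = 0" using w(1) by (simp add: supp_in_def)
      next
        fix p assume p: "p \<in> ?I"
        have "F w p = 0" using w(2) by simp
        thus "kirchhoff d n \<gamma> w p" using p by (simp add: F_def Kop_def kirchhoff_def)
      qed
      thus ?thesis by (simp add: zero_fun_def)
    qed
  next
    show "supp_in ?I y" by (simp add: y_def supp_in_def)
  qed
  then obtain w where w: "supp_in ?I w" "F w = y" by blast
  define u where "u = (\<lambda>q. w q + x' q)"
  have wz: "w q = 0" if "q \<notin> ?I" for q using w(1) that by (simp add: supp_in_def)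
  have "Pdir d n \<gamma> t x u"
    unfolding Pdir_def
  proof (intro conjI ballI)
    show "supp_in (LevS d n t \<union> JS d n (t - 1)) u"
      unfolding supp_in_def u_def x'_def using wz LevS_split[of d n t] by auto
  next
    fix q assume "q \<in> Lev d n t"
    thus "u q = x q" using wz Lev_notin by (simp add: u_def x'_def)
  next
    fix b assume b: "b \<in> JS d n (t - 1)"
    hence "b \<in> Bd d n" using JS_Bd by blast
    hence "b \<notin> Dom d n" using Bd_not_Dom by blast
    hence "b \<notin> ?I" "b \<notin> Lev d n t" using LevS_Dom Lev_Dom by blast+
    thus "u b = 0" using wz by (simp add: u_def x'_def)
  next
    fix p assume p: "p \<in> ?I"
    have "F w p = y p" using w(2) by simp
    hence "Kop d n \<gamma> w p = - Kop d n \<gamma> x' p" using p by (simp add: F_def y_def)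
    hence "Kop d n \<gamma> u p = 0" unfolding u_def by (simp add: Kop_add)
    thus "kirchhoff d n \<gamma> u p" by (simp add: Kop_def kirchhoff_def)
  qed
  thus ?thesis by blast
qed

lemma Pdir_the:
  assumes d: "d \<ge> 1" and pos: "\<And>p q. edge d n p q \<Longrightarrow> \<gamma> p q > 0"
  shows "Pdir d n \<gamma> t x (THE u. Pdir d n \<gamma> t x u)"
    and "Pdir d n \<gamma> t x u \<Longrightarrow> (THE u. Pdir d n \<gamma> t x u) = u"
proof -
  have ex1: "\<exists>!u. Pdir d n \<gamma> t x u"
  proof -
    have e: "\<exists>u. Pdir d n \<gamma> t x u"
      by (rule Pdir_exists[where d=d and n=n and \<gamma>=\<gamma>, OF d]) (rule pos)
    have "u1 = u2" if "Pdir d n \<gamma> t x u1" "Pdir d n \<gamma> t x u2" for u1 u2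
      by (rule Pdir_unique[where d=d and n=n and \<gamma>=\<gamma>, OF d _ that]) (rule pos)
    thus ?thesis using e by blast
  qed
  show "Pdir d n \<gamma> t x (THE u. Pdir d n \<gamma> t x u)" by (rule theI'[OF ex1])
  show "Pdir d n \<gamma> t x u \<Longrightarrow> (THE u. Pdir d n \<gamma> t x u) = u"
    using ex1 by (blast intro: the1_equality)
qed



theorem lemma3p2:
  fixes d n :: nat and t :: int and \<gamma> :: "int list \<Rightarrow> int list \<Rightarrow> real"
  assumes "d \<ge> 2" and "n \<ge> 1" and "int d \<le> t" and "t \<le> int d * int n"
    and "\<And>p q. edge d n p q \<Longrightarrow> \<gamma> p q > 0 \<and> \<gamma> p q = \<gamma> q p"
  shows "((\<forall>u. supp_in (LevS d n t \<union> JS d n (t - 1)) u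
             \<and> (\<forall>p\<in>LevS d n (t - 1). kirchhoff d n \<gamma> u p)
             \<and> (\<forall>b\<in>JS d n (t - 1). u b = 0)
             \<and> (\<forall>b\<in>JS d n (t - 1). \<gamma> b (qb d n b) * (u (qb d n b) - u b) = 0)
             \<longrightarrow> (\<forall>q. u q = 0))
       \<longleftrightarrow> lin_indep_restr (LevS d n t) (vvec d n \<gamma>) (LevS d n (t - 1) \<union> JS d n (t - 1)))
     \<and> (lin_indep_restr (LevS d n t) (vvec d n \<gamma>) (LevS d n (t - 1) \<union> JS d n (t - 1))
       \<longleftrightarrow> inj_on (T2' d n \<gamma> t) {x. supp_in (Lev d n t) x})"
  (is "(?A1 \<longleftrightarrow> ?A2) \<and> (_ \<longleftrightarrow> ?A3)")
proof -
  have d1: "d \<ge> 1" using assms(1) by simp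
  have pos: "\<And>p q. edge d n p q \<Longrightarrow> \<gamma> p q > 0" using assms(5) by blast
  have sym: "\<And>p q. edge d n p q \<Longrightarrow> \<gamma> p q = \<gamma> q p" using assms(5) by blast
  let ?I = "LevS d n (t - 1)" and ?LS = "LevS d n t" and ?Lt = "Lev d n t" and ?J = "JS d n (t - 1)"
  have LSD: "?LS \<subseteq> Dom d n" by (rule LevS_Dom)
  have ID: "?I \<subseteq> Dom d n" by (rule LevS_Dom)
  have ILS: "?I \<subseteq> ?LS" using LevS_split[of d n t] by blast
  have JB: "?J \<subseteq> Bd d n" by (rule JS_Bd)
  have JLS: "b \<in> ?J \<Longrightarrow> b \<notin> ?LS" for b using JB LSD Bd_not_Dom by blast
  have qbpos: "\<gamma> (qb d n b) b > 0" "\<gamma> b (qb d n b) > 0" if "b \<in> ?J" for b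
    using qb_prop[of b d n] that JB pos edge_sym by blast+
  have PT: "Pdir d n \<gamma> t x (THE u. Pdir d n \<gamma> t x u)" for x
    by (rule Pdir_the(1)[where d=d and n=n and \<gamma>=\<gamma>, OF d1]) (rule pos)
  have PT2: "Pdir d n \<gamma> t x u \<Longrightarrow> (THE u. Pdir d n \<gamma> t x u) = u" for x u
    by (rule Pdir_the(2)[where d=d and n=n and \<gamma>=\<gamma>, OF d1]) (rule pos)

  have i_ii: "?A2" if H1: "?A1"
    unfolding lin_indep_restr_def
  proof (rule allI, rule impI)
    fix c assume C: "\<forall>q\<in>?I \<union> ?J. (\<Sum>p\<in>?LS. c p * vvec d n \<gamma> p q) = 0"
    define u where "u = (\<lambda>r. if r \<in> ?LS then c r else 0)"
    have zero: "\<And>r. r \<notin> ?LS \<Longrightarrow> u r = 0" by (simp add: u_def)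
    have cu: "(\<Sum>p\<in>?LS. c p * vvec d n \<gamma> p q) = (\<Sum>p\<in>?LS. u p * vvec d n \<gamma> p q)" for q
      by (rule sum.cong) (auto simp: u_def)
    have "\<forall>q. u q = 0"
    proof (rule H1[THEN spec, THEN mp], intro conjI ballI)
      show "supp_in (?LS \<union> ?J) u" by (simp add: supp_in_def u_def)
    next
      fix p assume p: "p \<in> ?I"
      have "(\<Sum>r\<in>nbrs d n p. \<gamma> p r * (u r - u p)) = (\<Sum>r\<in>?LS. u r * vvec d n \<gamma> r p)"
        using KI[where \<gamma>=\<gamma> and d=d and n=n and q=p, OF sym LSD zero] p ID by auto
      also have "\<dots> = 0" using C p cu by auto
      finally show "kirchhoff d n \<gamma> u p" by (simp add: kirchhoff_def)
    next
      fix b assume b: "b \<in> ?J"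
      thus ub: "u b = 0" using zero JLS by blast
      have "u (qb d n b) * \<gamma> (qb d n b) b = (\<Sum>r\<in>?LS. u r * vvec d n \<gamma> r b)"
        using BI[where \<gamma>=\<gamma> and d=d and n=n and b=b, OF LSD zero] b JB by auto
      also have "\<dots> = 0" using C b cu by auto
      finally have "u (qb d n b) = 0" using qbpos[OF b] by simp
      thus "\<gamma> b (qb d n b) * (u (qb d n b) - u b) = 0" using ub by simp
    qed
    thus "\<forall>p\<in>?LS. c p = 0" unfolding u_def by (metis (full_types))
  qed

  have ii_i: "?A1" if H2: "?A2"
  proof (rule allI, rule impI)
    fix u assume U: "supp_in (?LS \<union> ?J) u \<and> (\<forall>p\<in>?I. kirchhoff d n \<gamma> u p)
             \<and> (\<forall>b\<in>?J. u b = 0) \<and> (\<forall>b\<in>?J. \<gamma> b (qb d n b) * (u (qb d n b) - u b) = 0)"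
    have zero: "\<And>r. r \<notin> ?LS \<Longrightarrow> u r = 0" using U by (auto simp: supp_in_def)
    have "\<forall>p\<in>?LS. u p = 0"
    proof (rule H2[unfolded lin_indep_restr_def, THEN spec, THEN mp], rule ballI)
      fix q assume q: "q \<in> ?I \<union> ?J"
      show "(\<Sum>p\<in>?LS. u p * vvec d n \<gamma> p q) = 0"
      proof (cases "q \<in> ?I")
        case True
        have "(\<Sum>p\<in>?LS. u p * vvec d n \<gamma> p q) = (\<Sum>r\<in>nbrs d n q. \<gamma> q r * (u r - u q))"
          using KI[where \<gamma>=\<gamma> and d=d and n=n and q=q, OF sym LSD zero] True ID by auto
        also have "\<dots> = 0" using U True by (simp add: kirchhoff_def)
        finally show ?thesis .
      next
        case False
        hence b: "q \<in> ?J" using q by blast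
        have "\<gamma> q (qb d n q) * (u (qb d n q) - u q) = 0" "u q = 0" using U b by auto
        hence "u (qb d n q) = 0" using qbpos[OF b] by simp
        moreover have "(\<Sum>p\<in>?LS. u p * vvec d n \<gamma> p q) = u (qb d n q) * \<gamma> (qb d n q) q"
          using BI[where \<gamma>=\<gamma> and d=d and n=n and b=q, OF LSD zero] b JB by auto
        ultimately show ?thesis by simp
      qed
    qed
    thus "\<forall>q. u q = 0" using zero by metis
  qed

  have i_iii: "?A3" if H1: "?A1"
  proof (rule inj_onI)
    fix x y assume x: "x \<in> {x. supp_in ?Lt x}" and y: "y \<in> {x. supp_in ?Lt x}"
      and T: "T2' d n \<gamma> t x = T2' d n \<gamma> t y"
    define sx where "sx = (THE u. Pdir d n \<gamma> t x u)"
    define sy where "sy = (THE u. Pdir d n \<gamma> t y u)"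
    have Px: "Pdir d n \<gamma> t x sx" unfolding sx_def by (rule PT)
    have Py: "Pdir d n \<gamma> t y sy" unfolding sy_def by (rule PT)
    have "\<forall>q. sx q - sy q = 0"
    proof (rule H1[THEN spec, THEN mp], intro conjI ballI)
      show "supp_in (?LS \<union> ?J) (\<lambda>q. sx q - sy q)"
        using Px Py by (simp add: Pdir_def supp_in_def)
    next
      fix p assume "p \<in> ?I"
      thus "kirchhoff d n \<gamma> (\<lambda>q. sx q - sy q) p" using Px Py kirch_diff by (simp add: Pdir_def)
    next
      fix b assume b: "b \<in> ?J"
      thus "sx b - sy b = 0" using Px Py by (simp add: Pdir_def)
      have "T2' d n \<gamma> t x b = T2' d n \<gamma> t y b" using T by simp
      hence "\<gamma> b (qb d n b) * (sx (qb d n b) - sx b) = \<gamma> b (qb d n b) * (sy (qb d n b) - sy b)"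
        using b unfolding T2'_alt sx_def sy_def by simp
      thus "\<gamma> b (qb d n b) * ((sx (qb d n b) - sy (qb d n b)) - (sx b - sy b)) = 0"
        by (simp add: algebra_simps)
    qed
    hence sxy: "sx q = sy q" for q by simp
    show "x = y"
    proof
      fix q show "x q = y q"
      proof (cases "q \<in> ?Lt")
        case True thus ?thesis using Px Py sxy[of q] by (simp add: Pdir_def)
      next
        case False thus ?thesis using x y by (simp add: supp_in_def)
      qed
    qed
  qed

  have iii_i: "?A1" if H3: "?A3"
  proof (rule allI, rule impI)
    fix u assume U: "supp_in (?LS \<union> ?J) u \<and> (\<forall>p\<in>?I. kirchhoff d n \<gamma> u p)
             \<and> (\<forall>b\<in>?J. u b = 0) \<and> (\<forall>b\<in>?J. \<gamma> b (qb d n b) * (u (qb d n b) - u b) = 0)"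
    define x where "x = (\<lambda>q. if q \<in> ?Lt then u q else 0)"
    have Pu: "Pdir d n \<gamma> t x u" using U by (simp add: Pdir_def x_def)
    have P0: "Pdir d n \<gamma> t (\<lambda>_. 0) (\<lambda>_. 0)" by (simp add: Pdir_def supp_in_def kirchhoff_def)
    have "T2' d n \<gamma> t x = (\<lambda>_. 0)"
      unfolding T2'_alt PT2[OF Pu] using U by (auto simp: fun_eq_iff)
    moreover have "T2' d n \<gamma> t (\<lambda>_. 0) = (\<lambda>_. 0)"
      unfolding T2'_alt PT2[OF P0] by (simp add: fun_eq_iff)
    ultimately have "x = (\<lambda>_. 0)"
      using H3[unfolded inj_on_def, rule_format, of x "\<lambda>_. 0"] by (simp add: supp_in_def x_def)
    hence Pu0: "Pdir d n \<gamma> t (\<lambda>_. 0) u" using Pu by simp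
    have "u = (\<lambda>_. 0)" using PT2[OF Pu0] PT2[OF P0] by simp
    thus "\<forall>q. u q = 0" by simp
  qed

  show ?thesis using i_ii ii_i i_iii iii_i by blast
qed


end
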